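(* Let $\Gamma$ be a simple connected graph of order $n$ and let $\mu$ be the algebraic connectivity of $\Gamma$. Then: (1) if $\Gamma$ is 3-regular, then $\mathrm{girth}(\Gamma)\ge \left\lceil\frac{n(\mu-1)}{\mu}\right\rceil$; (2) if $\Gamma$ is 4-regular, then $\mathrm{girth}(\Gamma)\ge \left\lceil\frac{n(\mu-2)}{\mu}\right\rceil$; (3) if $\Gamma$ is 5-regular, then $\mathrm{girth}(\Gamma)\ge \left\lceil\frac{n\mu}{n+\mu}\right\rceil$.
   Context: $\mathrm{girth}(\Gamma)$ is the length of a shortest cycle in $\Gamma$. The algebraic connectivity is the second smallest eigenvalue of the Laplacian matrix of $\Gamma$. *)

theory Defs
  imports "Jordan_Normal_Form.Char_Poly" "HOL-Library.Extended_Nat"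
begin

definition simple_graph :: "nat \<Rightarrow> (nat \<Rightarrow> nat \<Rightarrow> bool) \<Rightarrow> bool" where
  "simple_graph n E \<longleftrightarrow> (\<forall>u v. E u v \<longrightarrow> u < n \<and> v < n) \<and>
     (\<forall>u v. E u v \<longrightarrow> E v u) \<and> (\<forall>u. \<not> E u u)"

definition connected_graph :: "nat \<Rightarrow> (nat \<Rightarrow> nat \<Rightarrow> bool) \<Rightarrow> bool" where
  "connected_graph n E \<longleftrightarrow> (\<forall>u v. u < n \<longrightarrow> v < n \<longrightarrow> E\<^sup>*\<^sup>* u v)"

definition degree :: "nat \<Rightarrow> (nat \<Rightarrow> nat \<Rightarrow> bool) \<Rightarrow> nat \<Rightarrow> nat" where
  "degree n E v = card {u. u < n \<and> E v u}"

definition regular :: "nat \<Rightarrow> (nat \<Rightarrow> nat \<Rightarrow> bool) \<Rightarrow> nat \<Rightarrow> bool" where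
  "regular n E k \<longleftrightarrow> (\<forall>v < n. degree n E v = k)"

definition laplacian :: "nat \<Rightarrow> (nat \<Rightarrow> nat \<Rightarrow> bool) \<Rightarrow> real mat" where
  "laplacian n E = mat n n (\<lambda>(i, j). if i = j then real (degree n E i)
                                   else if E i j then -1 else 0)"

text \<open>Laplacian eigenvalues (with multiplicity), in non-decreasing order: the roots of
  the characteristic polynomial (real, since L is symmetric).\<close>
definition laplacian_eigenvalues :: "nat \<Rightarrow> (nat \<Rightarrow> nat \<Rightarrow> bool) \<Rightarrow> real list" where
  "laplacian_eigenvalues n E = sorted_list_of_multiset (proots (char_poly (laplacian n E)))"

definition algebraic_connectivity :: "nat \<Rightarrow> (nat \<Rightarrow> nat \<Rightarrow> bool) \<Rightarrow> real" where
  "algebraic_connectivity n E = laplacian_eigenvalues n E ! 1"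

definition is_cycle :: "nat \<Rightarrow> (nat \<Rightarrow> nat \<Rightarrow> bool) \<Rightarrow> nat list \<Rightarrow> bool" where
  "is_cycle n E c \<longleftrightarrow> length c \<ge> 3 \<and> distinct c \<and> set c \<subseteq> {..<n} \<and>
     (\<forall>i < length c. E (c ! i) (c ! ((i + 1) mod length c)))"

text \<open>Girth: length of a shortest cycle (infinity if acyclic).\<close>
definition girth :: "nat \<Rightarrow> (nat \<Rightarrow> nat \<Rightarrow> bool) \<Rightarrow> enat" where
  "girth n E = Inf {enat (length c) | c. is_cycle n E c}"

end

theory Submission
  imports Defs
begin



lemma mult_entry:
  fixes X Y :: "'a::comm_ring_1 mat"
  assumes "X \<in> carrier_mat a b" "Y \<in> carrier_mat b c" "i < a" "j < c"
  shows "(X * Y) $$ (i, j) = (\<Sum>p<b. X $$ (i, p) * Y $$ (p, j))"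
  using assms by (auto simp: scalar_prod_def lessThan_atLeast0 intro!: sum.cong)

lemma delta_sum1: "i < (n::nat) \<Longrightarrow> (\<Sum>p<n. (if i = p then 1 else 0) * f p) = (f i :: real)"
proof -
  assume i: "i < n"
  have "(\<Sum>p<n. (if i = p then 1 else 0) * f p) = (\<Sum>p<n. if p = i then f p else 0)"
    by (intro sum.cong) auto
  also have "\<dots> = f i" using i by (subst sum.delta) auto
  finally show ?thesis .
qed

lemma delta_sum2: "i < (n::nat) \<Longrightarrow> (\<Sum>p<n. (if p = i then 1 else 0) * f p) = (f i :: real)"
  using delta_sum1[of i n f] by (simp add: eq_commute)

lemma householder:
  fixes u :: "nat \<Rightarrow> real"
  assumes n: "n > 0" and u1: "(\<Sum>i<n. (u i)^2) = 1"
  shows "\<exists>H \<in> carrier_mat n n. transpose_mat H = H \<and> H * H = 1\<^sub>m n \<and> (\<forall>i<n. H $$ (i, 0) = u i)"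
proof (cases "u 0 = 1")
  case True
  have "(\<Sum>i<n. (u i)^2) = (u 0)^2 + (\<Sum>i\<in>{..<n}-{0}. (u i)^2)"
    using n by (subst sum.remove[of _ 0]) auto
  hence "(\<Sum>i\<in>{..<n}-{0}. (u i)^2) = 0" using True u1 by simp
  hence z: "\<forall>i\<in>{..<n}-{0}. (u i)^2 = 0" by (subst (asm) sum_nonneg_eq_0_iff) auto
  show ?thesis
  proof (intro bexI[of _ "1\<^sub>m n"] conjI allI impI)
    fix i assume "i < n" thus "1\<^sub>m n $$ (i, 0) = u i" using z True n by (cases "i = 0") auto
  qed auto
next
  case False
  define w where "w i = u i - (if i = 0 then 1 else 0)" for i
  define s where "s = (\<Sum>i<n. (w i)^2)"
  have "s = (\<Sum>i<n. (u i)^2 + (if i = 0 then 1 - 2 * u 0 else 0))"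
    unfolding s_def w_def by (intro sum.cong) (auto simp: power2_eq_square algebra_simps)
  also have "\<dots> = (\<Sum>i<n. (u i)^2) + (\<Sum>i<n. (if i = 0 then 1 - 2 * u 0 else 0))"
    by (rule sum.distrib)
  also have "\<dots> = 2 - 2 * u 0"
    using n by (simp add: u1)
  finally have s: "s = 2 - 2 * u 0" .
  have "(u 0)^2 \<le> 1"
    using u1 n member_le_sum[of 0 "{..<n}" "\<lambda>i. (u i)^2"] by auto
  hence "u 0 \<le> 1" by (metis abs_le_D1 abs_square_le_1)
  hence spos: "s > 0" using False s by auto
  define H where "H = mat n n (\<lambda>(i,j). (if i = j then 1 else 0) - 2 * w i * w j / s)"
  have Hc: "H \<in> carrier_mat n n" unfolding H_def by simp
  have Hs: "transpose_mat H = H" unfolding H_def by (rule eq_matI) (auto simp: mult_ac)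
  have HH: "H * H = 1\<^sub>m n"
  proof (rule eq_matI)
    fix i j assume i: "i < dim_row (1\<^sub>m n)" and j: "j < dim_col (1\<^sub>m n)"
    hence i: "i < n" and j: "j < n" by auto
    have "(H * H) $$ (i, j) = (\<Sum>p<n. ((if i = p then 1 else 0) - 2 * w i * w p / s) * ((if p = j then 1 else 0) - 2 * w p * w j / s))"
      using i j Hc by (subst mult_entry[OF Hc Hc]) (auto simp: H_def)
    also have "\<dots> = (\<Sum>p<n. (if i = p then 1 else 0) * (if p = j then 1 else 0)
         - (2 * w j / s) * ((if i = p then 1 else 0) * w p)
         - (2 * w i / s) * ((if p = j then 1 else 0) * w p)
         + (4 * w i * w j / s^2) * (w p)^2)"
      using spos by (intro sum.cong) (auto simp: power2_eq_square field_simps)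
    also have "\<dots> = (\<Sum>p<n. (if i = p then 1 else 0) * (if p = j then 1 else 0))
         - (2 * w j / s) * (\<Sum>p<n. (if i = p then 1 else 0) * w p)
         - (2 * w i / s) * (\<Sum>p<n. (if p = j then 1 else 0) * w p)
         + (4 * w i * w j / s^2) * (\<Sum>p<n. (w p)^2)"
      by (simp only: sum.distrib sum_subtractf sum_distrib_left)
    also have "\<dots> = (if i = j then 1 else 0) - (2 * w j / s) * w i - (2 * w i / s) * w j + (4 * w i * w j / s^2) * s"
    proof -
      have e1: "(\<Sum>p<n. (if i = p then 1 else 0) * (if p = j then 1 else 0)) = (if i = j then (1::real) else 0)"
        using delta_sum1[OF i, of "\<lambda>p. if p = j then 1 else 0"] by simp
      have e2: "(\<Sum>p<n. (if i = p then 1 else 0) * w p) = w i" using i by (rule delta_sum1)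
      have e3: "(\<Sum>p<n. (if p = j then 1 else 0) * w p) = w j" using j by (rule delta_sum2)
      have e4: "(\<Sum>p<n. (w p)^2) = s" unfolding s_def ..
      show ?thesis unfolding e1 e2 e3 e4 ..
    qed
    also have "\<dots> = (if i = j then 1 else 0)"
    proof -
      have "(4 * w i * w j / s^2) * s = (2 * w j / s) * w i + (2 * w i / s) * w j"
        using spos by (simp add: power2_eq_square field_simps)
      thus ?thesis by linarith
    qed
    finally show "(H * H) $$ (i, j) = 1\<^sub>m n $$ (i, j)" using i j by simp
  qed (auto simp: H_def)
  have "H $$ (i, 0) = u i" if i: "i < n" for i
  proof -
    have w0: "w 0 = u 0 - 1" unfolding w_def by simp
    have "H $$ (i, 0) = (if i = 0 then 1 else 0) - 2 * w i * (u 0 - 1) / (2 - 2 * u 0)"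
      using i n unfolding H_def by (simp add: w0 s)
    also have "\<dots> = (if i = 0 then 1 else 0) + w i"
      using spos s by (simp add: field_simps)
    also have "\<dots> = u i" unfolding w_def by simp
    finally show ?thesis .
  qed
  thus ?thesis using Hc Hs HH by blast
qed


lemma real_eig_exists:
  fixes A :: "nat \<Rightarrow> nat \<Rightarrow> real"
  assumes n: "n > 0" and sym: "\<forall>i<n. \<forall>j<n. A i j = A j i"
  shows "\<exists>lam v. (\<exists>i<n. v i \<noteq> 0) \<and> (\<forall>i<n. (\<Sum>j<n. A i j * v j) = lam * v i)"
proof -
  define M where "M = mat n n (\<lambda>(i,j). A i j)"
  have M: "M \<in> carrier_mat n n" unfolding M_def by simp
  define Mc where "Mc = map_mat complex_of_real M"
  have Mc: "Mc \<in> carrier_mat n n" unfolding Mc_def using M by simp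
  obtain as where as: "char_poly Mc = (\<Prod>a\<leftarrow>as. [:- a, 1:])" "length as = n"
    using char_poly_factorized[OF Mc] by blast
  then obtain c cs where ascs: "as = c # cs" using n by (cases as) auto
  have "poly (char_poly Mc) c = 0" unfolding as ascs by simp
  hence "eigenvalue Mc c" using eigenvalue_root_char_poly[OF Mc] by simp
  then obtain z where z: "eigenvector Mc z c" unfolding eigenvalue_def by blast
  hence zc: "z \<in> carrier_vec n" and z0: "z \<noteq> 0\<^sub>v n" and ze: "Mc *\<^sub>v z = c \<cdot>\<^sub>v z"
    using Mc unfolding eigenvector_def by auto
  have zrow: "(\<Sum>j<n. complex_of_real (A i j) * z $ j) = c * z $ i" if "i < n" for i
  proof -
    have "(Mc *\<^sub>v z) $ i = c * z $ i" using ze that zc by simp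
    moreover have "(Mc *\<^sub>v z) $ i = (\<Sum>j<n. complex_of_real (A i j) * z $ j)"
      using that zc Mc unfolding Mc_def M_def
      by (auto simp: scalar_prod_def lessThan_atLeast0 intro!: sum.cong)
    ultimately show ?thesis by simp
  qed
  define s where "s = (\<Sum>i<n. \<Sum>j<n. cnj (z $ i) * complex_of_real (A i j) * z $ j)"
  define N where "N = (\<Sum>i<n. cnj (z $ i) * z $ i)"
  have sN: "s = c * N"
  proof -
    have "s = (\<Sum>i<n. cnj (z $ i) * (\<Sum>j<n. complex_of_real (A i j) * z $ j))"
      unfolding s_def by (simp add: sum_distrib_left mult.assoc)
    also have "\<dots> = (\<Sum>i<n. cnj (z $ i) * (c * z $ i))" by (rule sum.cong, simp_all add: zrow)
    finally show ?thesis unfolding N_def by (simp add: sum_distrib_left mult_ac)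
  qed
  have cs: "cnj s = s"
  proof -
    have "cnj s = (\<Sum>i<n. \<Sum>j<n. z $ i * complex_of_real (A i j) * cnj (z $ j))"
      unfolding s_def by simp
    also have "\<dots> = (\<Sum>j<n. \<Sum>i<n. z $ i * complex_of_real (A i j) * cnj (z $ j))"
      by (rule sum.swap)
    also have "\<dots> = s" unfolding s_def
      by (rule sum.cong, simp, rule sum.cong, simp, simp add: sym mult_ac)
    finally show ?thesis .
  qed
  have Nr: "N = complex_of_real (\<Sum>i<n. (cmod (z $ i))^2)"
    unfolding N_def of_real_sum by (intro sum.cong refl) (subst complex_norm_square, simp add: mult.commute)
  obtain i0 where i0: "i0 < n" "z $ i0 \<noteq> 0" using z0 zc by (metis carrier_vecD eq_vecI index_zero_vec(1) index_zero_vec(2))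
  have Npos: "(\<Sum>i<n. (cmod (z $ i))^2) > 0"
  proof -
    have "(cmod (z $ i0))^2 \<le> (\<Sum>i<n. (cmod (z $ i))^2)"
      using i0 by (intro member_le_sum) auto
    moreover have "(cmod (z $ i0))^2 > 0" using i0 by simp
    ultimately show ?thesis by linarith
  qed
  hence N0: "N \<noteq> 0" unfolding Nr by (metis less_irrefl of_real_eq_0_iff)
  have "cnj c * N = c * N" using cs sN Nr by (metis complex_cnj_complex_of_real complex_cnj_mult)
  hence cc: "cnj c = c" using N0 by simp
  define r where "r = Re c"
  have cr: "c = complex_of_real r" unfolding r_def using cc by (metis Reals_cnj_iff complex_is_Real_iff of_real_Re)
  have "poly (char_poly Mc) (complex_of_real r) = 0" using \<open>poly (char_poly Mc) c = 0\<close> cr by simp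
  moreover have "char_poly Mc = map_poly of_real (char_poly M)"
    unfolding Mc_def by (rule of_real_hom.char_poly_hom[OF M])
  ultimately have "poly (char_poly M) r = 0" by simp
  hence "eigenvalue M r" using eigenvalue_root_char_poly[OF M] by simp
  then obtain v where v: "eigenvector M v r" unfolding eigenvalue_def by blast
  hence vc: "v \<in> carrier_vec n" and v0: "v \<noteq> 0\<^sub>v n" and ve: "M *\<^sub>v v = r \<cdot>\<^sub>v v"
    using M unfolding eigenvector_def by auto
  obtain j0 where j0: "j0 < n" "v $ j0 \<noteq> 0" using v0 vc by (metis carrier_vecD eq_vecI index_zero_vec(1) index_zero_vec(2))
  have "\<forall>i<n. (\<Sum>j<n. A i j * v $ j) = r * v $ i"
  proof (intro allI impI)
    fix i assume i: "i < n"
    have "(M *\<^sub>v v) $ i = r * v $ i" using ve i vc by simp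
    moreover have "(M *\<^sub>v v) $ i = (\<Sum>j<n. A i j * v $ j)"
      using i vc M unfolding M_def
      by (auto simp: scalar_prod_def lessThan_atLeast0 intro!: sum.cong)
    ultimately show "(\<Sum>j<n. A i j * v $ j) = r * v $ i" by simp
  qed
  thus ?thesis using j0 by blast
qed


definition dmat :: "nat \<Rightarrow> (nat \<Rightarrow> real) \<Rightarrow> real mat" where
  "dmat n d = mat n n (\<lambda>(i,j). if i = j then d i else 0)"

lemma dmat_carrier[simp]: "dmat n d \<in> carrier_mat n n" unfolding dmat_def by simp
lemma dmat_dims[simp]: "dim_row (dmat n d) = n" "dim_col (dmat n d) = n" unfolding dmat_def by simp_all

lemma mult_dmat_entry:
  assumes "U \<in> carrier_mat n n" "i < n" "k < n"
  shows "(U * dmat n d) $$ (i, k) = U $$ (i, k) * d k"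
proof -
  have "(U * dmat n d) $$ (i, k) = (\<Sum>p<n. U $$ (i, p) * (if p = k then d k else 0))"
    using assms by (subst mult_entry[OF assms(1) dmat_carrier]) (auto simp: dmat_def intro!: sum.cong)
  also have "\<dots> = (\<Sum>p<n. if p = k then U $$ (i, k) * d k else 0)" by (intro sum.cong) auto
  also have "\<dots> = U $$ (i, k) * d k" using assms by (subst sum.delta) auto
  finally show ?thesis .
qed

lemma spectral:
  fixes A :: "real mat"
  assumes "A \<in> carrier_mat n n" "transpose_mat A = A"
  shows "\<exists>U d. U \<in> carrier_mat n n \<and> transpose_mat U * U = 1\<^sub>m n \<and> A * U = U * dmat n d"
  using assms
proof (induction n arbitrary: A)
  case 0
  show ?case
    by (rule exI[of _ "1\<^sub>m 0"], rule exI[of _ "\<lambda>_. 0"]) (use 0 in \<open>auto intro!: eq_matI simp: dmat_def\<close>)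
next
  case (Suc m)
  define n where "n = Suc m"
  have A: "A \<in> carrier_mat n n" using Suc.prems n_def by simp
  have sym: "\<forall>i<n. \<forall>j<n. A $$ (i, j) = A $$ (j, i)"
  proof (intro allI impI)
    fix i j assume "i < n" "j < n"
    hence "transpose_mat A $$ (i, j) = A $$ (j, i)" using A by simp
    thus "A $$ (i, j) = A $$ (j, i)" using Suc.prems by simp
  qed
  obtain lam v where vnz: "\<exists>i<n. v i \<noteq> 0" and ve: "\<forall>i<n. (\<Sum>j<n. A $$ (i, j) * v j) = lam * v i"
    using real_eig_exists[of n "\<lambda>i j. A $$ (i, j)"] sym n_def by auto
  define nv where "nv = sqrt (\<Sum>i<n. (v i)^2)"
  obtain i0 where i0: "i0 < n" "v i0 \<noteq> 0" using vnz by blast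
  have "(v i0)^2 \<le> (\<Sum>i<n. (v i)^2)" using i0 by (intro member_le_sum) auto
  moreover have "(v i0)^2 > 0" using i0 by simp
  ultimately have sv: "(\<Sum>i<n. (v i)^2) > 0" by linarith
  hence nvpos: "nv > 0" unfolding nv_def by simp
  define u where "u i = v i / nv" for i
  have u1: "(\<Sum>i<n. (u i)^2) = 1"
  proof -
    have "(\<Sum>i<n. (u i)^2) = (\<Sum>i<n. (v i)^2) / nv^2"
      unfolding u_def by (simp add: power_divide sum_divide_distrib)
    also have "nv^2 = (\<Sum>i<n. (v i)^2)" unfolding nv_def using sv by simp
    finally show ?thesis using sv by simp
  qed
  have ue: "(\<Sum>j<n. A $$ (i, j) * u j) = lam * u i" if "i < n" for i
  proof -
    have "(\<Sum>j<n. A $$ (i, j) * u j) = (\<Sum>j<n. A $$ (i, j) * v j) / nv"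
      unfolding u_def by (simp add: sum_divide_distrib)
    thus ?thesis using ve that unfolding u_def by simp
  qed
  obtain H where H: "H \<in> carrier_mat n n" and Hs: "transpose_mat H = H" and HH: "H * H = 1\<^sub>m n"
    and H0: "\<forall>i<n. H $$ (i, 0) = u i"
    using householder[of n u] u1 n_def by auto
  define A' where "A' = H * A * H"
  have A': "A' \<in> carrier_mat n n" unfolding A'_def using H A by simp
  have A'H: "A' = H * (A * H)" unfolding A'_def using H A by simp
  have A's: "transpose_mat A' = A'"
  proof -
    have "transpose_mat A' = transpose_mat (A * H) * transpose_mat H"
      unfolding A'H by (rule transpose_mult[OF H], use A H in auto)
    also have "transpose_mat (A * H) = transpose_mat H * transpose_mat A"
      by (rule transpose_mult[OF A H])
    finally show ?thesis unfolding Hs Suc.prems(2) A'_def using A H by simp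
  qed
  have AH0: "(A * H) $$ (q, 0) = lam * H $$ (q, 0)" if q: "q < n" for q
  proof -
    have "(A * H) $$ (q, 0) = (\<Sum>p<n. A $$ (q, p) * H $$ (p, 0))"
      using q n_def by (subst mult_entry[OF A H]) auto
    also have "\<dots> = (\<Sum>p<n. A $$ (q, p) * u p)" using H0 by (intro sum.cong) auto
    also have "\<dots> = lam * u q" using ue q by simp
    finally show ?thesis using H0 q by simp
  qed
  have A'col: "A' $$ (i, 0) = (if i = 0 then lam else 0)" if i: "i < n" for i
  proof -
    have "A' $$ (i, 0) = (\<Sum>q<n. H $$ (i, q) * (A * H) $$ (q, 0))"
      unfolding A'H using i n_def by (subst mult_entry[OF H]) (use A H in auto)
    also have "\<dots> = lam * (\<Sum>q<n. H $$ (i, q) * H $$ (q, 0))"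
      by (simp add: AH0 sum_distrib_left mult_ac)
    also have "(\<Sum>q<n. H $$ (i, q) * H $$ (q, 0)) = (H * H) $$ (i, 0)"
      using i n_def by (subst mult_entry[OF H H]) auto
    also have "\<dots> = (if i = 0 then 1 else 0)" using HH i n_def by simp
    finally show ?thesis by simp
  qed
  have A'sym: "A' $$ (i, j) = A' $$ (j, i)" if "i < n" "j < n" for i j
  proof -
    have "transpose_mat A' $$ (i, j) = A' $$ (j, i)" using A' that by simp
    thus ?thesis using A's by simp
  qed
  have A'row: "A' $$ (0, j) = (if j = 0 then lam else 0)" if j: "j < n" for j
    using A'sym[of 0 j] A'col[OF j] j n_def by simp
  define B where "B = mat m m (\<lambda>(i,j). A' $$ (Suc i, Suc j))"
  have B: "B \<in> carrier_mat m m" unfolding B_def by simp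
  have Bs: "transpose_mat B = B"
    unfolding B_def by (rule eq_matI) (auto simp: n_def intro!: A'sym)
  obtain V e where V: "V \<in> carrier_mat m m" and VV: "transpose_mat V * V = 1\<^sub>m m"
    and BV: "B * V = V * dmat m e"
    using Suc.IH[OF B Bs] by blast
  define U' where "U' = mat n n (\<lambda>(p,k). if p = 0 then (if k = 0 then 1 else 0)
                      else if k = 0 then 0 else V $$ (p - 1, k - 1))"
  define d where "d k = (if k = 0 then lam else e (k - 1))" for k
  have U': "U' \<in> carrier_mat n n" unfolding U'_def by simp
  have U'U': "transpose_mat U' * U' = 1\<^sub>m n"
  proof (rule eq_matI)
    fix k l assume "k < dim_row (1\<^sub>m n)" "l < dim_col (1\<^sub>m n)"
    hence k: "k < n" and l: "l < n" by auto
    have "(transpose_mat U' * U') $$ (k, l) = (\<Sum>p<n. U' $$ (p, k) * U' $$ (p, l))"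
      using k l by (subst mult_entry[of _ n n _ n]) (use U' in auto)
    also have "\<dots> = U' $$ (0, k) * U' $$ (0, l) + (\<Sum>p<m. U' $$ (Suc p, k) * U' $$ (Suc p, l))"
      unfolding n_def by (rule sum.lessThan_Suc_shift)
    also have "\<dots> = (if k = l then 1 else 0)"
    proof (cases k)
      case 0
      thus ?thesis using k l by (cases l) (auto simp: U'_def n_def)
    next
      case (Suc k')
      show ?thesis
      proof (cases l)
        case 0 thus ?thesis using k l Suc by (auto simp: U'_def n_def)
      next
        case (Suc l')
        have "(\<Sum>p<m. U' $$ (Suc p, k) * U' $$ (Suc p, l)) = (\<Sum>p<m. V $$ (p, k') * V $$ (p, l'))"
          using k l \<open>k = Suc k'\<close> Suc by (intro sum.cong) (auto simp: U'_def n_def)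
        also have "\<dots> = (transpose_mat V * V) $$ (k', l')"
          using k l \<open>k = Suc k'\<close> Suc n_def by (subst mult_entry[of _ m m _ m]) (use V in auto)
        also have "\<dots> = (if k' = l' then 1 else 0)" using VV k l \<open>k = Suc k'\<close> Suc n_def by simp
        finally show ?thesis using k l \<open>k = Suc k'\<close> Suc by (auto simp: U'_def n_def)
      qed
    qed
    finally show "(transpose_mat U' * U') $$ (k, l) = 1\<^sub>m n $$ (k, l)" using k l by simp
  qed (use U' in auto)
  have A'U': "A' * U' = U' * dmat n d"
  proof (rule eq_matI)
    fix i k assume "i < dim_row (U' * dmat n d)" "k < dim_col (U' * dmat n d)"
    hence i: "i < n" and k: "k < n" using U' by (auto simp: dmat_def)
    have "(A' * U') $$ (i, k) = (\<Sum>p<n. A' $$ (i, p) * U' $$ (p, k))"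
      using i k by (subst mult_entry[OF A' U']) auto
    also have "\<dots> = A' $$ (i, 0) * U' $$ (0, k) + (\<Sum>p<m. A' $$ (i, Suc p) * U' $$ (Suc p, k))"
      unfolding n_def by (rule sum.lessThan_Suc_shift)
    also have "\<dots> = U' $$ (i, k) * d k"
    proof (cases k)
      case 0
      have "(\<Sum>p<m. A' $$ (i, Suc p) * U' $$ (Suc p, k)) = 0"
        using 0 by (intro sum.neutral) (auto simp: U'_def n_def)
      thus ?thesis using 0 i k A'col[OF i] by (auto simp: U'_def n_def d_def)
    next
      case (Suc k')
      have k': "k' < m" using k Suc n_def by simp
      show ?thesis
      proof (cases i)
        case 0
        have "(\<Sum>p<m. A' $$ (i, Suc p) * U' $$ (Suc p, k)) = 0"
          using 0 A'row by (intro sum.neutral) (auto simp: n_def)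
        thus ?thesis using 0 Suc k by (auto simp: U'_def n_def)
      next
        case (Suc i')
        have i': "i' < m" using i Suc n_def by simp
        have "(\<Sum>p<m. A' $$ (i, Suc p) * U' $$ (Suc p, k)) = (\<Sum>p<m. B $$ (i', p) * V $$ (p, k'))"
          using Suc \<open>k = Suc k'\<close> i' k' by (intro sum.cong) (auto simp: U'_def n_def B_def)
        also have "\<dots> = (B * V) $$ (i', k')" using i' k' by (subst mult_entry[OF B V]) auto
        also have "\<dots> = V $$ (i', k') * e k'" unfolding BV using i' k' by (rule mult_dmat_entry[OF V])
        finally show ?thesis using Suc \<open>k = Suc k'\<close> i' k' by (auto simp: U'_def n_def d_def)
      qed
    qed
    also have "\<dots> = (U' * dmat n d) $$ (i, k)" using i k by (rule mult_dmat_entry[OF U', symmetric])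
    finally show "(A' * U') $$ (i, k) = (U' * dmat n d) $$ (i, k)" .
  qed (use U' A' in auto)
  define U where "U = H * U'"
  have U: "U \<in> carrier_mat n n" unfolding U_def using H U' by simp
  have c: "transpose_mat U' \<in> carrier_mat n n" using U' by simp
  have "transpose_mat U * U = transpose_mat U' * H * (H * U')"
    unfolding U_def transpose_mult[OF H U'] Hs ..
  also have "\<dots> = transpose_mat U' * (H * (H * U'))"
    by (rule assoc_mult_mat[OF c H, of _ n]) (use H U' in simp)
  also have "H * (H * U') = (H * H) * U'" by (rule assoc_mult_mat[OF H H U', symmetric])
  also have "\<dots> = U'" unfolding HH using U' by simp
  finally have UU: "transpose_mat U * U = 1\<^sub>m n" using U'U' by simp
  have HA': "H * A' = A * H" unfolding A'_def using H A
    by (metis (no_types, lifting) HH assoc_mult_mat left_mult_one_mat mult_carrier_mat)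
  have "A * U = (A * H) * U'" unfolding U_def using A H U' by simp
  also have "\<dots> = H * (A' * U')" unfolding HA'[symmetric] using H A' U' by simp
  also have "\<dots> = U * dmat n d" unfolding A'U' U_def
    by (rule assoc_mult_mat[OF H U' dmat_carrier, symmetric])
  finally show ?case using U UU n_def by blast
qed



lemma expand_basis:
  fixes U A :: "nat \<Rightarrow> nat \<Rightarrow> real" and d w :: "nat \<Rightarrow> real"
  assumes rows: "\<forall>i<n. \<forall>j<n. (\<Sum>k<n. U i k * U j k) = (if i = j then 1 else 0)"
  and eig: "\<forall>k<n. \<forall>i<n. (\<Sum>j<n. A i j * U j k) = d k * U i k"
  defines "c \<equiv> (\<lambda>k. \<Sum>i<n. w i * U i k)"
  shows "\<forall>i<n. w i = (\<Sum>k<n. c k * U i k)"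
    and "(\<Sum>i<n. w i * (\<Sum>j<n. A i j * w j)) = (\<Sum>k<n. d k * (c k)^2)"
    and "(\<Sum>i<n. (w i)^2) = (\<Sum>k<n. (c k)^2)"
proof -
  show E1: "\<forall>i<n. w i = (\<Sum>k<n. c k * U i k)"
  proof (intro allI impI)
    fix i assume i: "i < n"
    have "(\<Sum>k<n. c k * U i k) = (\<Sum>k<n. \<Sum>j<n. w j * (U j k * U i k))"
      unfolding c_def by (simp add: sum_distrib_right sum_distrib_left mult_ac)
    also have "\<dots> = (\<Sum>j<n. w j * (\<Sum>k<n. U j k * U i k))"
      by (subst sum.swap) (simp add: sum_distrib_left)
    also have "\<dots> = (\<Sum>j<n. if j = i then w i else 0)"
      using rows i by (intro sum.cong) auto
    also have "\<dots> = w i" using i by (subst sum.delta) auto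
    finally show "w i = (\<Sum>k<n. c k * U i k)" by simp
  qed
  have Aw: "(\<Sum>j<n. A i j * w j) = (\<Sum>k<n. c k * d k * U i k)" if i: "i < n" for i
  proof -
    have "(\<Sum>j<n. A i j * w j) = (\<Sum>j<n. A i j * (\<Sum>k<n. c k * U j k))"
      using E1 by (intro sum.cong) auto
    also have "\<dots> = (\<Sum>k<n. c k * (\<Sum>j<n. A i j * U j k))"
      by (simp add: sum_distrib_left mult_ac) (subst sum.swap, simp)
    also have "\<dots> = (\<Sum>k<n. c k * d k * U i k)"
      using eig i by (intro sum.cong) auto
    finally show ?thesis .
  qed
  have "(\<Sum>i<n. w i * (\<Sum>j<n. A i j * w j)) = (\<Sum>i<n. w i * (\<Sum>k<n. c k * d k * U i k))"
    using Aw by (intro sum.cong) auto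
  also have "\<dots> = (\<Sum>k<n. c k * d k * (\<Sum>i<n. w i * U i k))"
    by (simp add: sum_distrib_left mult_ac) (subst sum.swap, simp)
  also have "\<dots> = (\<Sum>k<n. d k * (c k)^2)"
    unfolding c_def by (simp add: power2_eq_square mult_ac)
  finally show "(\<Sum>i<n. w i * (\<Sum>j<n. A i j * w j)) = (\<Sum>k<n. d k * (c k)^2)" .
  have "(\<Sum>i<n. (w i)^2) = (\<Sum>i<n. w i * (\<Sum>k<n. c k * U i k))"
    using E1 by (intro sum.cong) (auto simp: power2_eq_square)
  also have "\<dots> = (\<Sum>k<n. c k * (\<Sum>i<n. w i * U i k))"
    by (simp add: sum_distrib_left mult_ac) (subst sum.swap, simp)
  also have "\<dots> = (\<Sum>k<n. (c k)^2)"
    unfolding c_def by (simp add: power2_eq_square mult_ac)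
  finally show "(\<Sum>i<n. (w i)^2) = (\<Sum>k<n. (c k)^2)" .
qed

lemma sum_lin2: "(\<Sum>i\<in>S. (\<alpha>::real) * f i - \<beta> * g i) = \<alpha> * sum f S - \<beta> * sum g S"
  by (simp add: sum_subtractf sum_distrib_left)

lemma sum_lin3: "(\<Sum>i\<in>S. (\<alpha>::real) * f i - \<beta> * g i + \<gamma> * h i) = \<alpha> * sum f S - \<beta> * sum g S + \<gamma> * sum h S"
  by (simp add: sum.distrib sum_subtractf sum_distrib_left)

lemma rayleigh2:
  fixes A U :: "nat \<Rightarrow> nat \<Rightarrow> real" and d a x :: "nat \<Rightarrow> real" and rho :: real
  assumes sym: "\<forall>i<n. \<forall>j<n. A i j = A j i"
  and rows: "\<forall>i<n. \<forall>j<n. (\<Sum>k<n. U i k * U j k) = (if i = j then 1 else 0)"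
  and eig: "\<forall>k<n. \<forall>i<n. (\<Sum>j<n. A i j * U j k) = d k * U i k"
  and a0: "\<forall>i<n. (\<Sum>j<n. A i j * a j) = 0"
  and orth: "(\<Sum>i<n. a i * x i) = 0"
  and anz: "\<exists>i<n. a i \<noteq> 0" and xnz: "\<exists>i<n. x i \<noteq> 0"
  and rho: "rho \<ge> 0"
  and q: "(\<Sum>i<n. x i * (\<Sum>j<n. A i j * x j)) \<le> rho * (\<Sum>i<n. (x i)^2)"
  shows "2 \<le> card {k. k < n \<and> d k \<le> rho}"
proof (rule ccontr)
  assume "\<not> 2 \<le> card {k. k < n \<and> d k \<le> rho}"
  hence cK: "card {k. k < n \<and> d k \<le> rho} \<le> 1" by simp
  have n: "n > 0" using anz by auto
  obtain k0 where k0: "k0 < n" and k0b: "\<forall>k<n. k \<noteq> k0 \<longrightarrow> d k > rho"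
  proof (cases "card {k. k < n \<and> d k \<le> rho} = 0")
    case True
    hence "{k. k < n \<and> d k \<le> rho} = {}" by simp
    thus ?thesis using that[of 0] n by fastforce
  next
    case False
    hence "card {k. k < n \<and> d k \<le> rho} = 1" using cK by linarith
    then obtain k1 where "{k. k < n \<and> d k \<le> rho} = {k1}" by (rule card_1_singletonE)
    thus ?thesis using that[of k1] by (metis (mono_tags, lifting) insertI1 linorder_not_le mem_Collect_eq singletonD)
  qed
  define Q where "Q w = (\<Sum>i<n. w i * (\<Sum>j<n. A i j * w j))" for w
  define N where "N w = (\<Sum>i<n. (w i)^2)" for w :: "nat \<Rightarrow> real"
  have Npos: "N w > 0" if wh: "\<exists>i<n. w i \<noteq> 0" for w
  proof -
    obtain i where i: "i < n" "w i \<noteq> 0" using wh by blast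
    have "(w i)^2 \<le> N w" unfolding N_def using i by (intro member_le_sum) auto
    moreover have "(w i)^2 > 0" using i by simp
    ultimately show ?thesis by linarith
  qed
  define ca where "ca = (\<Sum>i<n. a i * U i k0)"
  define cx where "cx = (\<Sum>i<n. x i * U i k0)"
  define w where "w = (if ca = 0 \<and> cx = 0 then a else (\<lambda>i. cx * a i - ca * x i))"
  have wk0: "(\<Sum>i<n. w i * U i k0) = 0"
  proof (cases "ca = 0 \<and> cx = 0")
    case True thus ?thesis unfolding w_def ca_def by simp
  next
    case False
    have "(\<Sum>i<n. w i * U i k0) = (\<Sum>i<n. cx * (a i * U i k0) - ca * (x i * U i k0))"
    proof -
      have wF: "w = (\<lambda>i. cx * a i - ca * x i)" using False unfolding w_def by (simp only: if_False)
      show ?thesis unfolding wF by (simp add: algebra_simps)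
    qed
    also have "\<dots> = cx * ca - ca * cx"
      by (simp only: sum_subtractf sum_distrib_left[symmetric] ca_def[symmetric] cx_def[symmetric])
    finally show ?thesis by simp
  qed
  have axs: "(\<Sum>i<n. a i * (\<Sum>j<n. A i j * x j)) = 0"
  proof -
    have "(\<Sum>i<n. a i * (\<Sum>j<n. A i j * x j)) = (\<Sum>i<n. \<Sum>j<n. x j * (A j i * a i))"
      using sym by (simp add: sum_distrib_left mult_ac)
    also have "\<dots> = (\<Sum>j<n. x j * (\<Sum>i<n. A j i * a i))"
      by (subst sum.swap) (simp add: sum_distrib_left)
    also have "\<dots> = 0" using a0 by simp
    finally show ?thesis .
  qed
  have wF: "w = (\<lambda>i. cx * a i - ca * x i)" if F: "\<not> (ca = 0 \<and> cx = 0)"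
    using F unfolding w_def by (simp only: if_False)
  have wnz: "\<exists>i<n. w i \<noteq> 0"
  proof (cases "ca = 0 \<and> cx = 0")
    case True thus ?thesis using anz unfolding w_def by simp
  next
    case False
    show ?thesis
    proof (rule ccontr)
      assume "\<not> (\<exists>i<n. w i \<noteq> 0)"
      hence w0: "\<forall>i<n. cx * a i - ca * x i = 0" using wF[OF False] by simp
      have "(\<Sum>i<n. (cx * a i - ca * x i) * a i) = (\<Sum>i<n. cx * (a i)^2 - ca * (a i * x i))"
        by (intro sum.cong) (auto simp: power2_eq_square algebra_simps)
      also have "\<dots> = cx * N a - ca * (\<Sum>i<n. a i * x i)" unfolding sum_lin2 N_def ..
      finally have e1: "(\<Sum>i<n. (cx * a i - ca * x i) * a i) = cx * N a - ca * (\<Sum>i<n. a i * x i)" .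
      moreover have "(\<Sum>i<n. (cx * a i - ca * x i) * a i) = 0" using w0 by simp
      ultimately have "cx * N a = 0" using orth by simp
      hence cx0: "cx = 0" using Npos[OF anz] by simp
      have "(\<Sum>i<n. (cx * a i - ca * x i) * x i) = (\<Sum>i<n. cx * (a i * x i) - ca * (x i)^2)"
        by (intro sum.cong) (auto simp: power2_eq_square algebra_simps)
      also have "\<dots> = cx * (\<Sum>i<n. a i * x i) - ca * N x" unfolding sum_lin2 N_def ..
      finally have "(\<Sum>i<n. (cx * a i - ca * x i) * x i) = cx * (\<Sum>i<n. a i * x i) - ca * N x" .
      moreover have "(\<Sum>i<n. (cx * a i - ca * x i) * x i) = 0" using w0 by simp
      ultimately have "ca * N x = 0" using orth by simp
      hence "ca = 0" using Npos[OF xnz] by simp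
      thus False using cx0 False by simp
    qed
  qed
  have QN: "Q w \<le> rho * N w"
  proof (cases "ca = 0 \<and> cx = 0")
    case True
    have "Q w = 0" using True a0 unfolding w_def Q_def by simp
    moreover have "N w \<ge> 0" unfolding N_def by (intro sum_nonneg) auto
    ultimately show ?thesis using rho by simp
  next
    case False
    note wF' = wF[OF False]
    have Aw: "(\<Sum>j<n. A i j * w j) = - ca * (\<Sum>j<n. A i j * x j)" if i: "i < n" for i
    proof -
      have "(\<Sum>j<n. A i j * w j) = (\<Sum>j<n. cx * (A i j * a j) - ca * (A i j * x j))"
        unfolding wF' by (intro sum.cong) (auto simp: algebra_simps)
      also have "\<dots> = cx * (\<Sum>j<n. A i j * a j) - ca * (\<Sum>j<n. A i j * x j)" unfolding sum_lin2 ..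
      finally show ?thesis using a0 i by simp
    qed
    have "Q w = (\<Sum>i<n. (- (ca * cx)) * (a i * (\<Sum>j<n. A i j * x j)) - (- (ca^2)) * (x i * (\<Sum>j<n. A i j * x j)))"
      unfolding Q_def using Aw by (intro sum.cong) (auto simp: wF' power2_eq_square algebra_simps)
    also have "\<dots> = (- (ca * cx)) * (\<Sum>i<n. a i * (\<Sum>j<n. A i j * x j)) - (- (ca^2)) * Q x"
      unfolding sum_lin2 Q_def ..
    also have "\<dots> = ca^2 * Q x" using axs by simp
    finally have Qw: "Q w = ca^2 * Q x" .
    have "N w = (\<Sum>i<n. cx^2 * (a i)^2 - (2 * ca * cx) * (a i * x i) + ca^2 * (x i)^2)"
      unfolding N_def wF' by (intro sum.cong) (auto simp: power2_eq_square algebra_simps)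
    also have "\<dots> = cx^2 * N a - (2 * ca * cx) * (\<Sum>i<n. a i * x i) + ca^2 * N x"
      unfolding sum_lin3 N_def ..
    finally have Nw: "N w = cx^2 * N a + ca^2 * N x" using orth by simp
    have "Q w \<le> ca^2 * (rho * N x)" unfolding Qw using q unfolding Q_def N_def
      by (intro mult_left_mono) auto
    also have "\<dots> \<le> rho * N w" unfolding Nw
    proof -
      have "0 \<le> rho * (cx^2 * N a)" using rho Npos[OF anz] by simp
      thus "ca^2 * (rho * N x) \<le> rho * (cx^2 * N a + ca^2 * N x)" by (simp add: algebra_simps)
    qed
    finally show ?thesis .
  qed
  define c where "c = (\<lambda>k. \<Sum>i<n. w i * U i k)"
  note ex = expand_basis[OF rows eig, of w]
  have E1: "\<forall>i<n. w i = (\<Sum>k<n. c k * U i k)" using ex(1) unfolding c_def .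
  have E2: "Q w = (\<Sum>k<n. d k * (c k)^2)" using ex(2) unfolding c_def Q_def .
  have E3: "N w = (\<Sum>k<n. (c k)^2)" using ex(3) unfolding c_def N_def .
  have ck0: "c k0 = 0" unfolding c_def using wk0 .
  have "(\<Sum>k<n. (d k - rho) * (c k)^2) = Q w - rho * N w"
    unfolding E2 E3 by (simp add: left_diff_distrib sum_subtractf sum_distrib_left)
  hence le0: "(\<Sum>k<n. (d k - rho) * (c k)^2) \<le> 0" using QN by simp
  have nn: "\<forall>k\<in>{..<n}. 0 \<le> (d k - rho) * (c k)^2"
  proof
    fix k assume "k \<in> {..<n}"
    thus "0 \<le> (d k - rho) * (c k)^2" using k0b ck0 by (cases "k = k0") (auto intro!: mult_nonneg_nonneg)
  qed
  hence "(\<Sum>k<n. (d k - rho) * (c k)^2) = 0" using le0 sum_nonneg[of "{..<n}"] by (meson antisym)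
  hence z: "\<forall>k\<in>{..<n}. (d k - rho) * (c k)^2 = 0"
    using nn sum_nonneg_eq_0_iff[of "{..<n}" "\<lambda>k. (d k - rho) * (c k)^2"] by blast
  have "\<forall>k<n. c k = 0"
  proof (intro allI impI)
    fix k assume k: "k < n"
    show "c k = 0"
    proof (cases "k = k0")
      case True thus ?thesis using ck0 by simp
    next
      case False
      hence "d k - rho \<noteq> 0" using k0b k by force
      thus ?thesis using z k by (metis lessThan_iff mult_eq_0_iff power_eq_0_iff)
    qed
  qed
  hence "\<forall>i<n. w i = 0" using E1 by simp
  thus False using wnz by blast
qed



lemma lap_entry:
  "i < n \<Longrightarrow> j < n \<Longrightarrow> laplacian n E $$ (i, j) = (if i = j then real (degree n E i) else if E i j then -1 else 0)"
  unfolding laplacian_def by simp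

lemma lap_carrier: "laplacian n E \<in> carrier_mat n n" unfolding laplacian_def by simp

lemma deg_sum: "real (degree n E i) = (\<Sum>j<n. if E i j then 1 else 0)"
proof -
  have "{u. u < n \<and> E i u} = {j \<in> {..<n}. E i j}" by auto
  hence "real (degree n E i) = (\<Sum>j \<in> {j \<in> {..<n}. E i j}. 1)" unfolding degree_def by simp
  also have "\<dots> = (\<Sum>j<n. if E i j then 1 else 0)" by (rule sum.inter_filter) simp
  finally show ?thesis .
qed

lemma lap_row:
  assumes sg: "simple_graph n E" and i: "i < n"
  shows "(\<Sum>j<n. laplacian n E $$ (i, j) * x j) = real (degree n E i) * x i - (\<Sum>j<n. if E i j then x j else 0)"
proof -
  have irr: "\<not> E i i" using sg unfolding simple_graph_def by auto
  have "(\<Sum>j<n. laplacian n E $$ (i, j) * x j) = (\<Sum>j<n. (if j = i then real (degree n E i) * x i else 0) - (if E i j then x j else 0))"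
    using i irr by (intro sum.cong) (auto simp: lap_entry)
  also have "\<dots> = real (degree n E i) * x i - (\<Sum>j<n. if E i j then x j else 0)"
    using i by (simp add: sum_subtractf)
  finally show ?thesis .
qed

lemma lap_one:
  assumes sg: "simple_graph n E" and i: "i < n"
  shows "(\<Sum>j<n. laplacian n E $$ (i, j) * 1) = 0"
  using lap_row[OF sg i, of "\<lambda>_. 1"] deg_sum[of n E i] by simp

lemma lap_sym:
  assumes sg: "simple_graph n E" and "i < n" "j < n"
  shows "laplacian n E $$ (i, j) = laplacian n E $$ (j, i)"
  using assms unfolding simple_graph_def by (auto simp: lap_entry)

lemma sum_if_ij: "(\<Sum>i\<in>A. \<Sum>j\<in>B. if P i j then f i j - g i j + h i j else 0) =
   (\<Sum>i\<in>A. \<Sum>j\<in>B. if P i j then f i j else 0) - (\<Sum>i\<in>A. \<Sum>j\<in>B. if P i j then g i j else 0)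
   + (\<Sum>i\<in>A. \<Sum>j\<in>B. if P i j then h i j else (0::real))"
proof -
  have "(\<Sum>i\<in>A. \<Sum>j\<in>B. if P i j then f i j - g i j + h i j else 0) =
    (\<Sum>i\<in>A. \<Sum>j\<in>B. (if P i j then f i j else 0) - (if P i j then g i j else 0) + (if P i j then h i j else 0))"
    by (intro sum.cong) auto
  thus ?thesis by (simp add: sum.distrib sum_subtractf)
qed

lemma lap_quad:
  assumes sg: "simple_graph n E"
  shows "(\<Sum>i<n. x i * (\<Sum>j<n. laplacian n E $$ (i, j) * x j)) =
         (\<Sum>i<n. \<Sum>j<n. if E i j then (x i - x j)^2 else 0) / 2"
proof -
  have sym: "E i j = E j i" for i j using sg unfolding simple_graph_def by auto
  define S1 where "S1 = (\<Sum>i<n. \<Sum>j<n. if E i j then (x i)^2 else 0)"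
  define S2 where "S2 = (\<Sum>i<n. \<Sum>j<n. if E i j then x i * x j else 0)"
  define S3 where "S3 = (\<Sum>i<n. \<Sum>j<n. if E i j then (x j)^2 else 0)"
  have "(\<Sum>i<n. x i * (\<Sum>j<n. laplacian n E $$ (i, j) * x j)) =
        (\<Sum>i<n. x i * (real (degree n E i) * x i - (\<Sum>j<n. if E i j then x j else 0)))"
    using lap_row[OF sg] by (intro sum.cong) auto
  also have "\<dots> = (\<Sum>i<n. (\<Sum>j<n. if E i j then (x i)^2 else 0) - (\<Sum>j<n. if E i j then x i * x j else 0))"
  proof (intro sum.cong refl)
    fix i
    have "real (degree n E i) * (x i)^2 = (\<Sum>j<n. if E i j then (x i)^2 else 0)"
      unfolding deg_sum sum_distrib_right by (intro sum.cong) auto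
    moreover have "x i * (\<Sum>j<n. if E i j then x j else 0) = (\<Sum>j<n. if E i j then x i * x j else 0)"
      unfolding sum_distrib_left by (intro sum.cong) auto
    ultimately show "x i * (real (degree n E i) * x i - (\<Sum>j<n. if E i j then x j else 0)) =
      (\<Sum>j<n. if E i j then (x i)^2 else 0) - (\<Sum>j<n. if E i j then x i * x j else 0)"
      by (simp add: power2_eq_square algebra_simps)
  qed
  also have "\<dots> = S1 - S2" unfolding S1_def S2_def by (simp add: sum_subtractf)
  finally have L: "(\<Sum>i<n. x i * (\<Sum>j<n. laplacian n E $$ (i, j) * x j)) = S1 - S2" .
  have "(\<Sum>i<n. \<Sum>j<n. if E i j then (x i - x j)^2 else 0) =
        (\<Sum>i<n. \<Sum>j<n. if E i j then (x i)^2 - 2 * (x i * x j) + (x j)^2 else 0)"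
    by (intro sum.cong refl) (simp add: power2_eq_square algebra_simps)
  also have "\<dots> = S1 - (\<Sum>i<n. \<Sum>j<n. if E i j then 2 * (x i * x j) else 0) + S3"
    unfolding S1_def S3_def by (rule sum_if_ij)
  also have "(\<Sum>i<n. \<Sum>j<n. if E i j then 2 * (x i * x j) else 0) = 2 * S2"
    unfolding S2_def sum_distrib_left by (intro sum.cong) auto
  also have "S3 = S1"
  proof -
    have "S3 = (\<Sum>j<n. \<Sum>i<n. if E i j then (x j)^2 else 0)" unfolding S3_def by (rule sum.swap)
    also have "\<dots> = S1" unfolding S1_def using sym by (intro sum.cong refl) auto
    finally show ?thesis .
  qed
  finally show ?thesis using L by simp
qed

lemma lap_psd:
  assumes sg: "simple_graph n E"
  shows "(\<Sum>i<n. x i * (\<Sum>j<n. laplacian n E $$ (i, j) * x j)) \<ge> 0"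
  unfolding lap_quad[OF sg] by (intro divide_nonneg_pos sum_nonneg) auto


lemma sum_split_set:
  assumes "S \<subseteq> {..<(n::nat)}"
  shows "(\<Sum>i<n. if i \<in> S then f i else h i) = (\<Sum>i\<in>S. f i) + (\<Sum>i\<in>{..<n}-S. (h i :: real))"
proof -
  have "(\<Sum>i<n. if i \<in> S then f i else h i) = (\<Sum>i\<in>{..<n} \<inter> {i. i \<in> S}. f i) + (\<Sum>i\<in>{..<n} \<inter> - {i. i \<in> S}. h i)"
    by (rule sum.If_cases) simp
  moreover have "{..<n} \<inter> {i. i \<in> S} = S" using assms by auto
  moreover have "{..<n} \<inter> - {i. i \<in> S} = {..<n} - S" by auto
  ultimately show ?thesis by simp
qed

lemma card_real_sum: "real (card {j. j < (n::nat) \<and> P j}) = (\<Sum>j<n. if P j then 1 else 0)"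
proof -
  have "{j. j < n \<and> P j} = {j \<in> {..<n}. P j}" by auto
  hence "real (card {j. j < n \<and> P j}) = (\<Sum>j \<in> {j \<in> {..<n}. P j}. 1)" by simp
  also have "\<dots> = (\<Sum>j<n. if P j then 1 else 0)" by (rule sum.inter_filter) simp
  finally show ?thesis .
qed

lemma test_vec:
  assumes sg: "simple_graph n E" and S: "S \<subseteq> {..<n}" and gS: "card S = g" and gn: "g < n"
  and cut: "\<forall>i\<in>S. card {j. j < n \<and> E i j \<and> j \<notin> S} \<le> m"
  defines "x \<equiv> (\<lambda>i. if i \<in> S then real n - real g else - real g)"
  shows "(\<Sum>i<n. 1 * x i) = 0"
    and "(\<Sum>i<n. (x i)^2) = real g * (real n - real g) * real n"
    and "(\<Sum>i<n. x i * (\<Sum>j<n. laplacian n E $$ (i, j) * x j)) \<le> real m * real n / (real n - real g) * (\<Sum>i<n. (x i)^2)"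
proof -
  have sym: "E i j = E j i" for i j using sg unfolding simple_graph_def by auto
  have cD: "card ({..<n} - S) = n - g" using S gS by (simp add: card_Diff_subset finite_subset)
  have gle: "g \<le> n" using gn by simp
  show "(\<Sum>i<n. 1 * x i) = 0"
    unfolding x_def using sum_split_set[OF S, of "\<lambda>_. real n - real g" "\<lambda>_. - real g"]
    by (simp add: cD gS gle of_nat_diff algebra_simps)
  show N: "(\<Sum>i<n. (x i)^2) = real g * (real n - real g) * real n"
  proof -
    have "(\<Sum>i<n. (x i)^2) = (\<Sum>i<n. if i \<in> S then (real n - real g)^2 else (real g)^2)"
      unfolding x_def by (intro sum.cong) auto
    also have "\<dots> = real g * (real n - real g)^2 + (real n - real g) * (real g)^2"
      using sum_split_set[OF S, of "\<lambda>_. (real n - real g)^2" "\<lambda>_. (real g)^2"]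
      by (simp add: cD gS gle of_nat_diff)
    also have "\<dots> = real g * (real n - real g) * real n" by (simp add: power2_eq_square algebra_simps)
    finally show ?thesis .
  qed
  define T1 where "T1 = (\<Sum>i<n. \<Sum>j<n. if E i j \<and> i \<in> S \<and> j \<notin> S then (1::real) else 0)"
  define T2 where "T2 = (\<Sum>i<n. \<Sum>j<n. if E i j \<and> i \<notin> S \<and> j \<in> S then (1::real) else 0)"
  have T21: "T2 = T1"
  proof -
    have "T2 = (\<Sum>j<n. \<Sum>i<n. if E i j \<and> i \<notin> S \<and> j \<in> S then (1::real) else 0)" unfolding T2_def by (rule sum.swap)
    also have "\<dots> = T1" unfolding T1_def using sym by (intro sum.cong refl) auto
    finally show ?thesis .
  qed
  have "(\<Sum>i<n. \<Sum>j<n. if E i j then (x i - x j)^2 else 0) =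
        (\<Sum>i<n. \<Sum>j<n. (real n)^2 * (if E i j \<and> i \<in> S \<and> j \<notin> S then 1 else 0) + (real n)^2 * (if E i j \<and> i \<notin> S \<and> j \<in> S then 1 else 0))"
    unfolding x_def by (intro sum.cong refl) (auto simp: power2_eq_square algebra_simps)
  also have "\<dots> = (real n)^2 * T1 + (real n)^2 * T2"
    unfolding T1_def T2_def by (simp add: sum.distrib sum_distrib_left)
  finally have Q: "(\<Sum>i<n. x i * (\<Sum>j<n. laplacian n E $$ (i, j) * x j)) = (real n)^2 * T1"
    unfolding lap_quad[OF sg] T21 by simp
  have "T1 = (\<Sum>i<n. if i \<in> S then real (card {j. j < n \<and> E i j \<and> j \<notin> S}) else 0)"
    unfolding T1_def by (intro sum.cong refl) (auto simp: card_real_sum)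
  also have "\<dots> \<le> (\<Sum>i<n. if i \<in> S then real m else 0)"
    using cut by (intro sum_mono) auto
  also have "\<dots> = real g * real m"
    using sum_split_set[OF S, of "\<lambda>_. real m" "\<lambda>_. 0"] by (simp add: gS)
  finally have T1b: "T1 \<le> real g * real m" .
  have "(\<Sum>i<n. x i * (\<Sum>j<n. laplacian n E $$ (i, j) * x j)) \<le> (real n)^2 * (real g * real m)"
    unfolding Q by (intro mult_left_mono T1b) auto
  also have "\<dots> = real m * real n / (real n - real g) * (\<Sum>i<n. (x i)^2)"
    unfolding N using gn by (simp add: power2_eq_square field_simps)
  finally show "(\<Sum>i<n. x i * (\<Sum>j<n. laplacian n E $$ (i, j) * x j)) \<le> real m * real n / (real n - real g) * (\<Sum>i<n. (x i)^2)" .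
qed


lemma cycle_cut:
  assumes sg: "simple_graph n E" and reg: "regular n E k" and cyc: "is_cycle n E c"
  shows "\<forall>i\<in>set c. card {j. j < n \<and> E i j \<and> j \<notin> set c} \<le> k - 2"
    and "k \<ge> 2"
proof -
  have sym: "E i j \<Longrightarrow> E j i" for i j using sg unfolding simple_graph_def by auto
  define g where "g = length c"
  have g3: "g \<ge> 3" and dist: "distinct c" and sub: "set c \<subseteq> {..<n}"
    and adj: "\<forall>t<g. E (c ! t) (c ! ((t + 1) mod g))"
    using cyc unfolding is_cycle_def g_def by auto
  have main: "card {j. j < n \<and> E (c ! t) j \<and> j \<notin> set c} \<le> k - 2 \<and> k \<ge> 2" if t: "t < g" for t
  proof -
    define ip where "ip = (t + 1) mod g"
    define iq where "iq = (if t = 0 then g - 1 else t - 1)"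
    have ip: "ip < g" unfolding ip_def using g3 by simp
    have iq: "iq < g" unfolding iq_def using t g3 by auto
    have iqt: "(iq + 1) mod g = t" unfolding iq_def using t g3 by auto
    have ipq: "ip \<noteq> iq"
    proof (cases "t = 0")
      case True
      hence "ip = 1" unfolding ip_def using g3 by simp
      moreover have "iq = g - 1" unfolding iq_def using True by simp
      ultimately show ?thesis using g3 by simp
    next
      case False
      show ?thesis
      proof (cases "t + 1 < g")
        case True
        thus ?thesis unfolding ip_def iq_def using False by simp
      next
        case False2: False
        hence "t + 1 = g" using t by simp
        hence "ip = 0" unfolding ip_def by simp
        moreover have "iq = g - 2" unfolding iq_def using False \<open>t + 1 = g\<close> by simp
        ultimately show ?thesis using g3 by simp
      qed
    qed
    define i where "i = c ! t"
    define p where "p = c ! ip"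
    define q where "q = c ! iq"
    have Eip: "E i p" unfolding i_def p_def ip_def using adj t by simp
    have Eiq: "E i q" unfolding i_def q_def using adj iq iqt sym by metis
    have pq: "p \<noteq> q" unfolding p_def q_def using dist ip iq ipq g_def nth_eq_iff_index_eq by metis
    have pS: "p \<in> set c" and qS: "q \<in> set c" unfolding p_def q_def using ip iq g_def by auto
    have pn: "p < n" and qn: "q < n" using pS qS sub by auto
    have i_lt: "i < n" unfolding i_def using t sub g_def by (meson lessThan_iff nth_mem subsetD)
    have degk: "card {j. j < n \<and> E i j} = k" using reg i_lt unfolding regular_def degree_def by simp
    have fin: "finite {j. j < n \<and> E i j}" by simp
    have pqsub: "{p, q} \<subseteq> {j. j < n \<and> E i j}" using Eip Eiq pn qn by auto
    have c2: "card {p, q} = 2" using pq by simp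
    have "card {p, q} \<le> k" using card_mono[OF fin pqsub] degk by simp
    hence k2: "k \<ge> 2" using c2 by simp
    have "{j. j < n \<and> E i j \<and> j \<notin> set c} \<subseteq> {j. j < n \<and> E i j} - {p, q}" using pS qS by auto
    hence "card {j. j < n \<and> E i j \<and> j \<notin> set c} \<le> card ({j. j < n \<and> E i j} - {p, q})"
      by (intro card_mono) auto
    also have "\<dots> = k - 2" using card_Diff_subset[OF _ pqsub] degk c2 by simp
    finally show ?thesis using k2 unfolding i_def by simp
  qed
  show "\<forall>i\<in>set c. card {j. j < n \<and> E i j \<and> j \<notin> set c} \<le> k - 2"
    using main by (metis g_def in_set_conv_nth)
  show "k \<ge> 2" using main[of 0] g3 by simp
qed



lemma proots_linear_prod: "proots (\<Prod>a\<leftarrow>xs. [:- a, 1:]) = mset (xs :: real list)"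
proof (induction xs)
  case Nil thus ?case by simp
next
  case (Cons a xs)
  have nz: "(\<Prod>a\<leftarrow>xs. [:- a, 1:]) \<noteq> (0 :: real poly)"
    by (auto simp: prod_list_zero_iff)
  have "proots (\<Prod>a\<leftarrow>a # xs. [:- a, 1:]) = proots ([:- a, 1:] * (\<Prod>a\<leftarrow>xs. [:- a, 1:]))" by simp
  also have "\<dots> = proots [:- a, 1:] + proots (\<Prod>a\<leftarrow>xs. [:- a, 1:])"
    by (rule proots_mult) (use nz in auto)
  finally show ?case using Cons by simp
qed

lemma eig_list:
  fixes A U :: "real mat"
  assumes A: "A \<in> carrier_mat n n" and U: "U \<in> carrier_mat n n"
    and UU: "transpose_mat U * U = 1\<^sub>m n" and AU: "A * U = U * dmat n d"
  shows "U * transpose_mat U = 1\<^sub>m n"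
    and "sorted_list_of_multiset (proots (char_poly A)) = sort (map d [0..<n])"
proof -
  have Ut: "transpose_mat U \<in> carrier_mat n n" using U by simp
  show UUt: "U * transpose_mat U = 1\<^sub>m n" by (rule mat_mult_left_right_inverse[OF Ut U UU])
  have "A = A * (U * transpose_mat U)" unfolding UUt using A by simp
  also have "\<dots> = (A * U) * transpose_mat U" using A U Ut by simp
  also have "\<dots> = U * dmat n d * transpose_mat U" unfolding AU ..
  finally have AD: "A = U * dmat n d * transpose_mat U" .
  have "similar_mat_wit A (dmat n d) U (transpose_mat U)"
    unfolding similar_mat_wit_def Let_def using A U Ut UU UUt AD by auto
  hence "similar_mat A (dmat n d)" unfolding similar_mat_def by blast
  hence cp: "char_poly A = char_poly (dmat n d)" by (rule char_poly_similar)
  have ut: "upper_triangular (dmat n d)" unfolding upper_triangular_def dmat_def by auto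
  have "char_poly (dmat n d) = (\<Prod>a\<leftarrow>diag_mat (dmat n d). [:- a, 1:])"
    by (rule char_poly_upper_triangular[OF dmat_carrier ut])
  also have "diag_mat (dmat n d) = map d [0..<n]"
    unfolding diag_mat_def dmat_def by (intro nth_equalityI) auto
  finally have "char_poly A = (\<Prod>a\<leftarrow>map d [0..<n]. [:- a, 1:])" using cp by simp
  thus "sorted_list_of_multiset (proots (char_poly A)) = sort (map d [0..<n])"
    by (simp only: proots_linear_prod sorted_list_of_multiset_mset)
qed

lemma sorted_second:
  fixes xs :: "real list"
  assumes "sorted xs" and "2 \<le> length (filter (\<lambda>y. y \<le> r) xs)"
  shows "xs ! 1 \<le> r"
proof (rule ccontr)
  assume nle: "\<not> xs ! 1 \<le> r"
  have len: "2 \<le> length xs" using assms(2) length_filter_le order_trans by blast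
  obtain a t where xt: "xs = a # t" using len by (cases xs) auto
  obtain b ys where "t = b # ys" using len xt by (cases t) auto
  hence xs: "xs = a # b # ys" using xt by simp
  have "\<forall>y\<in>set ys. b \<le> y" using assms(1) xs by simp
  hence "filter (\<lambda>y. y \<le> r) ys = []" using nle xs by (auto simp: filter_empty_conv)
  hence "length (filter (\<lambda>y. y \<le> r) xs) \<le> 1" using nle xs by simp
  thus False using assms(2) by simp
qed

lemma length_filter_sort_map:
  "length (filter P (sort (map d [0..<n]))) = card {k. k < n \<and> P (d k)}"
proof -
  have "length (filter P (sort (map d [0..<n]))) = size (filter_mset P (mset (sort (map d [0..<n]))))"
    by (simp only: mset_filter[symmetric] size_mset)
  also have "\<dots> = size (filter_mset P (mset (map d [0..<n])))" by (simp only: mset_sort)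
  also have "\<dots> = length (filter P (map d [0..<n]))" by (simp only: mset_filter[symmetric] size_mset)
  also have "\<dots> = card {k. k < n \<and> P (d k)}"
  proof -
    have "length (filter P (map d [0..<n])) = card {i. i < length (map d [0..<n]) \<and> P (map d [0..<n] ! i)}"
      by (rule length_filter_conv_card)
    also have "{i. i < length (map d [0..<n]) \<and> P (map d [0..<n] ! i)} = {k. k < n \<and> P (d k)}"
      by (intro Collect_cong) auto
    finally show ?thesis .
  qed
  finally show ?thesis .
qed

lemma key:
  assumes sg: "simple_graph n E" and reg: "regular n E k" and cyc: "is_cycle n E c"
  shows "0 \<le> algebraic_connectivity n E \<and>
         algebraic_connectivity n E * (real n - real (length c)) \<le> (real k - 2) * real n"
proof -
  define L where "L = laplacian n E"
  have Lc: "L \<in> carrier_mat n n" unfolding L_def by (rule lap_carrier)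
  have Lt: "transpose_mat L = L"
    by (rule eq_matI) (use Lc in \<open>auto simp: L_def intro: lap_sym[OF sg]\<close>)
  obtain U d where U: "U \<in> carrier_mat n n" and UU: "transpose_mat U * U = 1\<^sub>m n"
    and LU: "L * U = U * dmat n d"
    using spectral[OF Lc Lt] by blast
  note el = eig_list[OF Lc U UU LU]
  define ev where "ev = sort (map d [0..<n])"
  have mu: "algebraic_connectivity n E = ev ! 1"
    unfolding algebraic_connectivity_def laplacian_eigenvalues_def ev_def using el(2) L_def by simp
  define g where "g = length c"
  have g3: "g \<ge> 3" and dist: "distinct c" and sub: "set c \<subseteq> {..<n}"
    using cyc unfolding is_cycle_def g_def by auto
  have cardS: "card (set c) = g" using dist distinct_card g_def by blast
  have gn: "g \<le> n" using card_mono[OF _ sub] cardS by simp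
  have rows: "\<forall>i<n. \<forall>j<n. (\<Sum>k<n. U $$ (i, k) * U $$ (j, k)) = (if i = j then 1 else 0)"
  proof (intro allI impI)
    fix i j assume i: "i < n" and j: "j < n"
    have "(U * transpose_mat U) $$ (i, j) = (\<Sum>k<n. U $$ (i, k) * U $$ (j, k))"
      using i j U by (subst mult_entry[of _ n n _ n]) auto
    thus "(\<Sum>k<n. U $$ (i, k) * U $$ (j, k)) = (if i = j then 1 else 0)" using el(1) i j by simp
  qed
  have cols: "(\<Sum>i<n. U $$ (i, k) * U $$ (i, k)) = 1" if k: "k < n" for k
  proof -
    have "(transpose_mat U * U) $$ (k, k) = (\<Sum>i<n. U $$ (i, k) * U $$ (i, k))"
      using k U by (subst mult_entry[of _ n n _ n]) auto
    thus ?thesis using UU k by simp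
  qed
  have eig: "\<forall>k<n. \<forall>i<n. (\<Sum>j<n. L $$ (i, j) * U $$ (j, k)) = d k * U $$ (i, k)"
  proof (intro allI impI)
    fix k i assume k: "k < n" and i: "i < n"
    have "(\<Sum>j<n. L $$ (i, j) * U $$ (j, k)) = (L * U) $$ (i, k)"
      using i k by (subst mult_entry[OF Lc U]) auto
    also have "\<dots> = (U * dmat n d) $$ (i, k)" unfolding LU ..
    also have "\<dots> = U $$ (i, k) * d k" by (rule mult_dmat_entry[OF U i k])
    finally show "(\<Sum>j<n. L $$ (i, j) * U $$ (j, k)) = d k * U $$ (i, k)" by (simp add: mult.commute)
  qed
  have dnn: "d k \<ge> 0" if k: "k < n" for k
  proof -
    have "(\<Sum>i<n. U $$ (i, k) * (\<Sum>j<n. L $$ (i, j) * U $$ (j, k))) = (\<Sum>i<n. d k * (U $$ (i, k) * U $$ (i, k)))"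
      using eig k by (intro sum.cong) (auto simp: mult_ac)
    also have "\<dots> = d k" using cols[OF k] by (simp add: sum_distrib_left[symmetric])
    finally show ?thesis using lap_psd[OF sg, of "\<lambda>i. U $$ (i, k)"] unfolding L_def by simp
  qed
  have lenev: "length ev = n" unfolding ev_def by simp
  have "ev ! 1 \<in> set ev" using lenev g3 gn by simp
  hence "ev ! 1 \<in> d ` {..<n}" unfolding ev_def by auto
  hence mu0: "ev ! 1 \<ge> 0" using dnn by auto
  note cc = cycle_cut[OF sg reg cyc]
  have "ev ! 1 * (real n - real g) \<le> (real k - 2) * real n"
  proof (cases "g = n")
    case True thus ?thesis using cc(2) by simp
  next
    case False
    hence gl: "g < n" using gn by simp
    define x where "x = (\<lambda>i. if i \<in> set c then real n - real g else - real g)"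
    note tv = test_vec[OF sg sub cardS gl cc(1)]
    define rho where "rho = real (k - 2) * real n / (real n - real g)"
    have rho0: "rho \<ge> 0" unfolding rho_def using gl by simp
    have "\<exists>i<n. i \<notin> set c"
    proof (rule ccontr)
      assume "\<not> (\<exists>i<n. i \<notin> set c)"
      hence sub2: "{..<n} \<subseteq> set c" by auto
      have "n \<le> g" using card_mono[OF _ sub2] cardS by simp
      thus False using gl by simp
    qed
    then obtain i0 where i0: "i0 < n" "i0 \<notin> set c" by blast
    have xnz: "\<exists>i<n. x i \<noteq> 0" using i0 g3 unfolding x_def by (intro exI[of _ i0]) auto
    have "2 \<le> card {k. k < n \<and> d k \<le> rho}"
    proof (rule rayleigh2[of n "\<lambda>i j. L $$ (i, j)" "\<lambda>i k. U $$ (i, k)" d "\<lambda>_. 1" x rho])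
      show "\<forall>i<n. \<forall>j<n. L $$ (i, j) = L $$ (j, i)" unfolding L_def using lap_sym[OF sg] by blast
      show "\<forall>i<n. \<forall>j<n. (\<Sum>k<n. U $$ (i, k) * U $$ (j, k)) = (if i = j then 1 else 0)" by (rule rows)
      show "\<forall>k<n. \<forall>i<n. (\<Sum>j<n. L $$ (i, j) * U $$ (j, k)) = d k * U $$ (i, k)" by (rule eig)
      show "\<forall>i<n. (\<Sum>j<n. L $$ (i, j) * 1) = 0" unfolding L_def using lap_one[OF sg] by blast
      show "(\<Sum>i<n. 1 * x i) = 0" using tv(1) unfolding x_def .
      show "\<exists>i<n. (1::real) \<noteq> 0" using gl by auto
      show "\<exists>i<n. x i \<noteq> 0" by (rule xnz)
      show "0 \<le> rho" by (rule rho0)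
      show "(\<Sum>i<n. x i * (\<Sum>j<n. L $$ (i, j) * x j)) \<le> rho * (\<Sum>i<n. (x i)^2)"
        using tv(3) unfolding rho_def L_def x_def .
    qed
    hence "2 \<le> length (filter (\<lambda>y. y \<le> rho) ev)" unfolding ev_def length_filter_sort_map .
    hence "ev ! 1 \<le> rho" by (intro sorted_second) (auto simp: ev_def)
    hence "ev ! 1 * (real n - real g) \<le> rho * (real n - real g)"
      using gl by (intro mult_right_mono) auto
    also have "\<dots> = real (k - 2) * real n"
    proof -
      have "real n - real g \<noteq> 0" using gl by simp
      thus ?thesis unfolding rho_def by simp
    qed
    also have "\<dots> = (real k - 2) * real n" using cc(2) by (simp add: of_nat_diff)
    finally show ?thesis .
  qed
  thus ?thesis using mu mu0 g_def by simp
qed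



lemma girth_lb:
  fixes B :: "real \<Rightarrow> real"
  assumes sg: "simple_graph n E" and reg: "regular n E k"
  and hyp: "\<And>g mu. 0 \<le> mu \<Longrightarrow> mu * (real n - real g) \<le> (real k - 2) * real n \<Longrightarrow> 3 \<le> g \<Longrightarrow> g \<le> n \<Longrightarrow> B mu \<le> real g"
  shows "girth n E \<ge> enat (nat \<lceil>B (algebraic_connectivity n E)\<rceil>)"
  unfolding girth_def
proof (rule Inf_greatest)
  fix y assume "y \<in> {enat (length c) |c. is_cycle n E c}"
  then obtain c where y: "y = enat (length c)" and cyc: "is_cycle n E c" by blast
  have g3: "3 \<le> length c" and dist: "distinct c" and sub: "set c \<subseteq> {..<n}"
    using cyc unfolding is_cycle_def by auto
  have "length c = card (set c)" using dist distinct_card by metis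
  also have "\<dots> \<le> n" using card_mono[OF _ sub] by simp
  finally have gn: "length c \<le> n" .
  note k = key[OF sg reg cyc]
  have Bl: "B (algebraic_connectivity n E) \<le> real (length c)"
    using hyp[OF _ _ g3 gn] k by blast
  have "nat \<lceil>B (algebraic_connectivity n E)\<rceil> \<le> length c" using Bl by simp
  thus "enat (nat \<lceil>B (algebraic_connectivity n E)\<rceil>) \<le> y" unfolding y by simp
qed

theorem theorem5:
  fixes n :: nat and E :: "nat \<Rightarrow> nat \<Rightarrow> bool"
  assumes "simple_graph n E" and "connected_graph n E"
  defines "\<mu> \<equiv> algebraic_connectivity n E"
  shows "(regular n E 3 \<longrightarrow> girth n E \<ge> enat (nat \<lceil>real n * (\<mu> - 1) / \<mu>\<rceil>)) \<and>
         (regular n E 4 \<longrightarrow> girth n E \<ge> enat (nat \<lceil>real n * (\<mu> - 2) / \<mu>\<rceil>)) \<and>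
         (regular n E 5 \<longrightarrow> girth n E \<ge> enat (nat \<lceil>real n * \<mu> / (real n + \<mu>)\<rceil>))"
proof (intro conjI impI)
  assume reg: "regular n E 3"
  have "girth n E \<ge> enat (nat \<lceil>(\<lambda>m. real n * (m - 1) / m) (algebraic_connectivity n E)\<rceil>)"
  proof (rule girth_lb[OF assms(1) reg])
    fix g :: nat and mu :: real
    assume m0: "0 \<le> mu" and h: "mu * (real n - real g) \<le> (real 3 - 2) * real n" and "3 \<le> g" "g \<le> n"
    show "real n * (mu - 1) / mu \<le> real g"
    proof (cases "mu = 0")
      case True thus ?thesis by simp
    next
      case False
      hence mp: "mu > 0" using m0 by simp
      have "real n * (mu - 1) \<le> real g * mu" using h by (simp add: algebra_simps)
      thus ?thesis using mp by (simp add: pos_divide_le_eq)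
    qed
  qed
  thus "girth n E \<ge> enat (nat \<lceil>real n * (\<mu> - 1) / \<mu>\<rceil>)" unfolding \<mu>_def by simp
next
  assume reg: "regular n E 4"
  have "girth n E \<ge> enat (nat \<lceil>(\<lambda>m. real n * (m - 2) / m) (algebraic_connectivity n E)\<rceil>)"
  proof (rule girth_lb[OF assms(1) reg])
    fix g :: nat and mu :: real
    assume m0: "0 \<le> mu" and h: "mu * (real n - real g) \<le> (real 4 - 2) * real n" and "3 \<le> g" "g \<le> n"
    show "real n * (mu - 2) / mu \<le> real g"
    proof (cases "mu = 0")
      case True thus ?thesis by simp
    next
      case False
      hence mp: "mu > 0" using m0 by simp
      have "real n * (mu - 2) \<le> real g * mu" using h by (simp add: algebra_simps)
      thus ?thesis using mp by (simp add: pos_divide_le_eq)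
    qed
  qed
  thus "girth n E \<ge> enat (nat \<lceil>real n * (\<mu> - 2) / \<mu>\<rceil>)" unfolding \<mu>_def by simp
next
  assume reg: "regular n E 5"
  have "girth n E \<ge> enat (nat \<lceil>(\<lambda>m. real n * m / (real n + m)) (algebraic_connectivity n E)\<rceil>)"
  proof (rule girth_lb[OF assms(1) reg])
    fix g :: nat and mu :: real
    assume m0: "0 \<le> mu" and h: "mu * (real n - real g) \<le> (real 5 - 2) * real n" and g3: "3 \<le> g" and gn: "g \<le> n"
    show "real n * mu / (real n + mu) \<le> real g"
    proof -
      have np: "real n + mu > 0" using g3 gn m0 by simp
      have "3 * real n \<le> real g * real n" using g3 by (intro mult_right_mono) auto
      hence "real n * mu \<le> real g * (real n + mu)" using h by (simp add: algebra_simps)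
      thus ?thesis using np by (simp add: pos_divide_le_eq)
    qed
  qed
  thus "girth n E \<ge> enat (nat \<lceil>real n * \<mu> / (real n + \<mu>)\<rceil>)" unfolding \<mu>_def by simp
qed


end
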